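(* Consider the linear model $y=\mathbf{x}\beta_o+\varepsilon$, where $\mathbf{x}$ is a random $1\times p$ row vector with $\mathbb{E}[\mathbf{x}]=0$ and $\beta_o\in\mathbb{R}^p$ is nonrandom. Assume (i) $\mathbb{E}[\varepsilon\mid\mathbf{x}]=0$ a.s.; (ii) there exist constants $B>0$, $d>2$ such that, uniformly in $n$, $\mathbb{E}[|\varepsilon|^d\mid\mathbf{x}]\le B$ a.s., $\mathbb{E}[|\mathbf{x}\tau|^d]\le B$ and $B^{-1}\le\mathbb{E}[|\mathbf{x}\tau|^2]$ for all $\tau\in\mathcal{S}_p$. Then (a) the minimiser of $Q_o(m\delta)$ over $m\in\mathcal{M}_k$, $\delta\in\Delta$ solves the weighted clustering problem $\min_{m\in\mathcal{M}_k,\delta\in\Delta}\|m\delta-\beta_o\|^2_{\mathbb{E}[\mathbf{x}'\mathbf{x}]}$; and (b) $\|b_k\|^2\asymp\min_{m\in\mathcal{M}_k,\delta\in\Delta}\|m\delta-\beta_o\|^2_{\mathbb{E}[\mathbf{x}'\mathbf{x}]}$.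
   Context: $\|\cdot\|$ is the Euclidean norm; $\mathcal{S}_p=\{\tau\in\mathbb{R}^p:\|\tau\|=1\}$; for a positive definite $W$, $\|v\|_W^2:=v'Wv$. $\mathcal{M}_k$ ($1\le k\le p$) is the set of $p\times k$ binary matrices each of whose rows has exactly one entry $1$ (group assignment of the $p$ coordinates; column sums are group sizes), with standing condition that group sizes for every $m\in\mathcal{M}_k$ are bounded above by a constant $M$ and away from zero uniformly in $p$. $\Delta\subset\mathbb{R}^k$. $(m_o,\delta_o)$ minimises the unweighted $\|m\delta-\beta_o\|^2$ over $m\in\mathcal{M}_k,\delta\in\Delta$ and $b_k:=\beta_o-m_o\delta_o$. $Q_o(m\delta):=\mathbb{E}[(y-\mathbf{x}m\delta)^2]/p$. For nonnegative sequences, $a\lesssim b$ means $a\le cb$ for some finite $c>0$, and $a\asymp b$ means $a\lesssim b$ and $b\lesssim a$. *)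

theory Defs
  imports "HOL-Probability.Probability"
begin

(* Vectors in R^p are functions nat => real, only indices i < p matter.
   Matrices are functions nat => nat => real. *)

definition sqnorm :: "nat \<Rightarrow> (nat \<Rightarrow> real) \<Rightarrow> real" where
  "sqnorm p v = (\<Sum>i<p. (v i)\<^sup>2)"

definition wsqnorm :: "nat \<Rightarrow> (nat \<Rightarrow> nat \<Rightarrow> real) \<Rightarrow> (nat \<Rightarrow> real) \<Rightarrow> real" where
  "wsqnorm p W v = (\<Sum>i<p. \<Sum>j<p. v i * W i j * v j)"

definition mvec :: "nat \<Rightarrow> (nat \<Rightarrow> nat \<Rightarrow> real) \<Rightarrow> (nat \<Rightarrow> real) \<Rightarrow> (nat \<Rightarrow> real)" where
  "mvec k m \<delta> = (\<lambda>i. \<Sum>j<k. m i j * \<delta> j)"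

definition rowdot :: "nat \<Rightarrow> (nat \<Rightarrow> real) \<Rightarrow> (nat \<Rightarrow> real) \<Rightarrow> real" where
  "rowdot p x t = (\<Sum>i<p. x i * t i)"

definition sphere_p :: "nat \<Rightarrow> (nat \<Rightarrow> real) set" where
  "sphere_p p = {t. sqnorm p t = 1}"

definition Mset :: "nat \<Rightarrow> nat \<Rightarrow> real \<Rightarrow> real \<Rightarrow> (nat \<Rightarrow> nat \<Rightarrow> real) set" where
  "Mset p k Mlo Mhi = {m. (\<forall>i j. m i j = 0 \<or> m i j = 1)
      \<and> (\<forall>i j. (p \<le> i \<or> k \<le> j) \<longrightarrow> m i j = 0)
      \<and> (\<forall>i<p. \<exists>!j. j < k \<and> m i j = 1)
      \<and> (\<forall>j<k. Mlo \<le> (\<Sum>i<p. m i j) \<and> (\<Sum>i<p. m i j) \<le> Mhi)}"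

definition gen_sigma :: "'a measure \<Rightarrow> nat \<Rightarrow> ('a \<Rightarrow> nat \<Rightarrow> real) \<Rightarrow> 'a measure" where
  "gen_sigma M p x = vimage_algebra (space M) (\<lambda>\<omega>. restrict (x \<omega>) {..<p}) (PiM {..<p} (\<lambda>_. borel))"

definition Sigma_x :: "'a measure \<Rightarrow> ('a \<Rightarrow> nat \<Rightarrow> real) \<Rightarrow> nat \<Rightarrow> nat \<Rightarrow> real" where
  "Sigma_x M x = (\<lambda>i j. \<integral>\<omega>. x \<omega> i * x \<omega> j \<partial>M)"

definition Qo :: "'a measure \<Rightarrow> nat \<Rightarrow> ('a \<Rightarrow> nat \<Rightarrow> real) \<Rightarrow> ('a \<Rightarrow> real)
    \<Rightarrow> (nat \<Rightarrow> real) \<Rightarrow> (nat \<Rightarrow> real) \<Rightarrow> real" where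
  "Qo M p x \<epsilon> \<beta> v =
     (\<integral>\<omega>. ((rowdot p (x \<omega>) \<beta> + \<epsilon> \<omega>) - rowdot p (x \<omega>) v)\<^sup>2 \<partial>M) / real p"

end

theory Submission
  imports Defs
begin

lemma sq_le_powr:
  fixes t d :: real assumes "d > 2" shows "t^2 \<le> 1 + \<bar>t\<bar> powr d"
proof (cases "\<bar>t\<bar> \<le> 1")
  case True
  then have "t^2 \<le> 1" by (metis abs_ge_zero power2_abs power_le_one)
  then show ?thesis using powr_ge_zero[of "\<bar>t\<bar>" d] by linarith
next
  case False
  then have "t^2 = \<bar>t\<bar> powr 2" by (simp add: powr_numeral)
  also have "\<dots> \<le> \<bar>t\<bar> powr d" using False assms by (intro powr_mono) auto
  finally show ?thesis by simp
qed

lemma L2_of_powr: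
  assumes "prob_space M" "f \<in> borel_measurable M" "d > 2" "B \<ge> 0"
    "(\<integral>\<^sup>+\<omega>. ennreal (\<bar>f \<omega>\<bar> powr d) \<partial>M) \<le> ennreal B"
  shows "(\<integral>\<^sup>+\<omega>. ennreal ((f \<omega>)^2) \<partial>M) \<le> ennreal (1 + B)"
    "integrable M (\<lambda>\<omega>. (f \<omega>)^2)"
proof -
  interpret prob_space M by fact
  have "(\<integral>\<^sup>+\<omega>. ennreal ((f \<omega>)^2) \<partial>M) \<le> (\<integral>\<^sup>+\<omega>. ennreal 1 + ennreal (\<bar>f \<omega>\<bar> powr d) \<partial>M)"
    by (intro nn_integral_mono) (metis assms(3) ennreal_leI ennreal_plus powr_ge_zero sq_le_powr zero_le_one)
  also have "\<dots> = (\<integral>\<^sup>+\<omega>. ennreal 1 \<partial>M) + (\<integral>\<^sup>+\<omega>. ennreal (\<bar>f \<omega>\<bar> powr d) \<partial>M)"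
    using assms(2) by (intro nn_integral_add) auto
  also have "\<dots> \<le> 1 + ennreal B" using assms(5) by (simp add: add_left_mono emeasure_space_1)
  also have "\<dots> = ennreal (1 + B)" using assms(4) by (simp add: ennreal_plus)
  finally show *: "(\<integral>\<^sup>+\<omega>. ennreal ((f \<omega>)^2) \<partial>M) \<le> ennreal (1 + B)" .
  show "integrable M (\<lambda>\<omega>. (f \<omega>)^2)"
  proof (rule integrableI_bounded)
    show "(\<lambda>\<omega>. (f \<omega>)^2) \<in> borel_measurable M" using assms(2) by measurable
    have "(\<integral>\<^sup>+\<omega>. ennreal (norm ((f \<omega>)^2)) \<partial>M) = (\<integral>\<^sup>+\<omega>. ennreal ((f \<omega>)^2) \<partial>M)" by simp
    also have "\<dots> < \<infinity>" using * by (metis ennreal_less_top infinity_ennreal_def le_less_trans)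
    finally show "(\<integral>\<^sup>+\<omega>. ennreal (norm ((f \<omega>)^2)) \<partial>M) < \<infinity>" .
  qed
qed

lemma abs_mult_le_sq: fixes a b :: real shows "\<bar>a * b\<bar> \<le> a^2 + b^2"
proof -
  have "0 \<le> (\<bar>a\<bar> - \<bar>b\<bar>)^2" by simp
  then have "2 * \<bar>a\<bar> * \<bar>b\<bar> \<le> \<bar>a\<bar>^2 + \<bar>b\<bar>^2" by (simp add: power2_diff)
  moreover have "0 \<le> \<bar>a\<bar> * \<bar>b\<bar>" by simp
  ultimately show ?thesis using power2_abs[of a] power2_abs[of b] unfolding abs_mult by linarith
qed

lemma sqnorm_nonneg: "0 \<le> sqnorm p v"
  by (simp add: sqnorm_def sum_nonneg)

lemma integrable_mult_L2:
  fixes f g :: "_ \<Rightarrow> real"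
  assumes "integrable M (\<lambda>\<omega>. (f \<omega>)^2)" "integrable M (\<lambda>\<omega>. (g \<omega>)^2)"
    "f \<in> borel_measurable M" "g \<in> borel_measurable M"
  shows "integrable M (\<lambda>\<omega>. f \<omega> * g \<omega>)"
proof (rule Bochner_Integration.integrable_bound[where f="\<lambda>\<omega>. (f \<omega>)^2 + (g \<omega>)^2"])
  show "integrable M (\<lambda>\<omega>. (f \<omega>)^2 + (g \<omega>)^2)" using assms by auto
  show "(\<lambda>\<omega>. f \<omega> * g \<omega>) \<in> borel_measurable M" using assms by measurable
  show "AE \<omega> in M. norm (f \<omega> * g \<omega>) \<le> norm ((f \<omega>)^2 + (g \<omega>)^2)"
    using abs_mult_le_sq by auto
qed


lemma rowdot_meas:
  assumes "\<forall>i<p. (\<lambda>\<omega>. x \<omega> i) \<in> borel_measurable M"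
  shows "(\<lambda>\<omega>. rowdot p (x \<omega>) u) \<in> borel_measurable M"
  unfolding rowdot_def using assms by (intro borel_measurable_sum) auto

lemma wsq_eq:
  assumes "\<forall>i<p. \<forall>j<p. integrable M (\<lambda>\<omega>. x \<omega> i * x \<omega> j)"
  shows "integrable M (\<lambda>\<omega>. (rowdot p (x \<omega>) u)^2)"
    "wsqnorm p (Sigma_x M x) u = (\<integral>\<omega>. (rowdot p (x \<omega>) u)^2 \<partial>M)"
proof -
  have eq: "(\<lambda>\<omega>. (rowdot p (x \<omega>) u)^2) = (\<lambda>\<omega>. \<Sum>i<p. \<Sum>j<p. u i * (x \<omega> i * x \<omega> j) * u j)"
    by (auto simp: rowdot_def power2_eq_square sum_product mult_ac)
  have ij: "\<And>i j. i<p \<Longrightarrow> j<p \<Longrightarrow> integrable M (\<lambda>\<omega>. u i * (x \<omega> i * x \<omega> j) * u j)"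
    using assms by auto
  have i: "\<And>i. i<p \<Longrightarrow> integrable M (\<lambda>\<omega>. \<Sum>j<p. u i * (x \<omega> i * x \<omega> j) * u j)"
    using ij by (intro Bochner_Integration.integrable_sum) auto
  show "integrable M (\<lambda>\<omega>. (rowdot p (x \<omega>) u)^2)"
    unfolding eq by (rule Bochner_Integration.integrable_sum) (simp add: i)
  have "(\<integral>\<omega>. (rowdot p (x \<omega>) u)^2 \<partial>M) = (\<Sum>i<p. \<integral>\<omega>. (\<Sum>j<p. u i * (x \<omega> i * x \<omega> j) * u j) \<partial>M)"
    unfolding eq by (rule Bochner_Integration.integral_sum) (simp add: i)
  also have "\<dots> = (\<Sum>i<p. \<Sum>j<p. \<integral>\<omega>. u i * (x \<omega> i * x \<omega> j) * u j \<partial>M)"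
    using ij by (intro sum.cong refl Bochner_Integration.integral_sum) auto
  also have "\<dots> = wsqnorm p (Sigma_x M x) u"
    by (simp add: wsqnorm_def Sigma_x_def)
  finally show "wsqnorm p (Sigma_x M x) u = (\<integral>\<omega>. (rowdot p (x \<omega>) u)^2 \<partial>M)" by simp
qed

lemma rowdot_scale: "rowdot p X (\<lambda>i. s * t i) = s * rowdot p X t"
  by (simp add: rowdot_def sum_distrib_left mult_ac)

lemma quad_bounds:
  assumes "B > 0"
    and int: "\<And>u. integrable M (\<lambda>\<omega>. (rowdot p (x \<omega>) u)^2)"
    and bnd: "\<And>\<tau>. \<tau> \<in> sphere_p p \<Longrightarrow> 1 / B \<le> (\<integral>\<omega>. (rowdot p (x \<omega>) \<tau>)^2 \<partial>M)
               \<and> (\<integral>\<omega>. (rowdot p (x \<omega>) \<tau>)^2 \<partial>M) \<le> 1 + B"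
  shows "sqnorm p u / B \<le> (\<integral>\<omega>. (rowdot p (x \<omega>) u)^2 \<partial>M)
       \<and> (\<integral>\<omega>. (rowdot p (x \<omega>) u)^2 \<partial>M) \<le> (1 + B) * sqnorm p u"
proof (cases "sqnorm p u = 0")
  case True
  then have "\<forall>i\<in>{..<p}. (u i)^2 = 0" unfolding sqnorm_def
    by (subst sum_nonneg_eq_0_iff[symmetric]) auto
  then have "\<And>X. rowdot p X u = 0" by (simp add: rowdot_def)
  then show ?thesis using True by simp
next
  case False
  have nn: "sqnorm p u \<ge> 0" unfolding sqnorm_def by (auto intro: sum_nonneg)
  define s where "s = sqrt (sqnorm p u)"
  have s0: "s > 0" using False nn by (simp add: s_def)
  have ss: "s^2 = sqnorm p u" using nn by (simp add: s_def)
  define \<tau> where "\<tau> = (\<lambda>i. u i / s)"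
  have "sqnorm p \<tau> = sqnorm p u / s^2"
    by (simp add: sqnorm_def \<tau>_def power_divide sum_divide_distrib)
  then have "\<tau> \<in> sphere_p p" using ss False by (simp add: sphere_p_def)
  note b = bnd[OF this]
  have "u = (\<lambda>i. s * \<tau> i)" using s0 by (auto simp: \<tau>_def)
  then have "\<And>\<omega>. (rowdot p (x \<omega>) u)^2 = s^2 * (rowdot p (x \<omega>) \<tau>)^2"
    by (metis rowdot_scale power_mult_distrib)
  then have I: "(\<integral>\<omega>. (rowdot p (x \<omega>) u)^2 \<partial>M) = sqnorm p u * (\<integral>\<omega>. (rowdot p (x \<omega>) \<tau>)^2 \<partial>M)"
    using ss by simp
  define E where "E = (\<integral>\<omega>. (rowdot p (x \<omega>) \<tau>)^2 \<partial>M)"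
  have "sqnorm p u * 1 \<le> sqnorm p u * (B * E)"
    using b nn assms(1) by (intro mult_left_mono) (auto simp: E_def field_simps)
  then have 1: "sqnorm p u / B \<le> sqnorm p u * E" using assms(1) by (simp add: field_simps)
  have 2: "sqnorm p u * E \<le> sqnorm p u * (1 + B)" using b nn by (intro mult_left_mono) (auto simp: E_def)
  show ?thesis unfolding I E_def[symmetric] using 1 2 by (simp add: mult.commute)
qed

theorem proposition2:
  fixes B d Mlo Mhi :: real
  assumes "B > 0" and "d > 2" and "Mlo > 0"
  shows "\<exists>c>0. \<forall>(M::'a measure) (p::nat) (k::nat) (x::'a \<Rightarrow> nat \<Rightarrow> real) (\<epsilon>::'a \<Rightarrow> real)
            (\<beta>::nat \<Rightarrow> real) (\<Delta>::(nat \<Rightarrow> real) set) mo \<delta>o.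
    ( prob_space M
    \<and> 1 \<le> k \<and> k \<le> p
    \<and> (\<forall>i<p. (\<lambda>\<omega>. x \<omega> i) \<in> borel_measurable M)
    \<and> \<epsilon> \<in> borel_measurable M
    \<and> (\<forall>i<p. integrable M (\<lambda>\<omega>. x \<omega> i) \<and> (\<integral>\<omega>. x \<omega> i \<partial>M) = 0)
    \<and> integrable M \<epsilon>
    \<and> (AE \<omega> in M. real_cond_exp M (gen_sigma M p x) \<epsilon> \<omega> = 0)
    \<and> (AE \<omega> in M. nn_cond_exp M (gen_sigma M p x) (\<lambda>\<omega>. ennreal (\<bar>\<epsilon> \<omega>\<bar> powr d)) \<omega> \<le> ennreal B)
    \<and> (\<forall>\<tau>\<in>sphere_p p.
          (\<integral>\<^sup>+\<omega>. ennreal (\<bar>rowdot p (x \<omega>) \<tau>\<bar> powr d) \<partial>M) \<le> ennreal B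
        \<and> ennreal (1 / B) \<le> (\<integral>\<^sup>+\<omega>. ennreal ((rowdot p (x \<omega>) \<tau>)\<^sup>2) \<partial>M))
    \<and> mo \<in> Mset p k Mlo Mhi \<and> \<delta>o \<in> \<Delta>
    \<and> (\<forall>m\<in>Mset p k Mlo Mhi. \<forall>\<delta>\<in>\<Delta>.
          sqnorm p (\<lambda>i. mvec k mo \<delta>o i - \<beta> i) \<le> sqnorm p (\<lambda>i. mvec k m \<delta> i - \<beta> i)) )
    \<longrightarrow>
    ( (\<forall>m1\<in>Mset p k Mlo Mhi. \<forall>\<delta>1\<in>\<Delta>.
         (\<forall>m\<in>Mset p k Mlo Mhi. \<forall>\<delta>\<in>\<Delta>. Qo M p x \<epsilon> \<beta> (mvec k m1 \<delta>1) \<le> Qo M p x \<epsilon> \<beta> (mvec k m \<delta>))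
         \<longrightarrow> (\<forall>m\<in>Mset p k Mlo Mhi. \<forall>\<delta>\<in>\<Delta>.
                wsqnorm p (Sigma_x M x) (\<lambda>i. mvec k m1 \<delta>1 i - \<beta> i)
                  \<le> wsqnorm p (Sigma_x M x) (\<lambda>i. mvec k m \<delta> i - \<beta> i)))
    \<and> (let b = (\<lambda>i. \<beta> i - mvec k mo \<delta>o i);
           W = (INF m\<delta>\<in>Mset p k Mlo Mhi \<times> \<Delta>.
                  wsqnorm p (Sigma_x M x) (\<lambda>i. mvec k (fst m\<delta>) (snd m\<delta>) i - \<beta> i))
       in sqnorm p b \<le> c * W \<and> W \<le> c * sqnorm p b) )"
proof (intro exI[of _ "1 + B"] conjI allI impI)
  show "1 + B > 0" using assms(1) by simp
  fix M :: "'a measure" and p k :: nat and x :: "'a \<Rightarrow> nat \<Rightarrow> real" and \<epsilon> :: "'a \<Rightarrow> real"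
    and \<beta> :: "nat \<Rightarrow> real" and \<Delta> :: "(nat \<Rightarrow> real) set" and mo \<delta>o
  assume H: "prob_space M
    \<and> 1 \<le> k \<and> k \<le> p
    \<and> (\<forall>i<p. (\<lambda>\<omega>. x \<omega> i) \<in> borel_measurable M)
    \<and> \<epsilon> \<in> borel_measurable M
    \<and> (\<forall>i<p. integrable M (\<lambda>\<omega>. x \<omega> i) \<and> (\<integral>\<omega>. x \<omega> i \<partial>M) = 0)
    \<and> integrable M \<epsilon>
    \<and> (AE \<omega> in M. real_cond_exp M (gen_sigma M p x) \<epsilon> \<omega> = 0)
    \<and> (AE \<omega> in M. nn_cond_exp M (gen_sigma M p x) (\<lambda>\<omega>. ennreal (\<bar>\<epsilon> \<omega>\<bar> powr d)) \<omega> \<le> ennreal B)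
    \<and> (\<forall>\<tau>\<in>sphere_p p.
          (\<integral>\<^sup>+\<omega>. ennreal (\<bar>rowdot p (x \<omega>) \<tau>\<bar> powr d) \<partial>M) \<le> ennreal B
        \<and> ennreal (1 / B) \<le> (\<integral>\<^sup>+\<omega>. ennreal ((rowdot p (x \<omega>) \<tau>)\<^sup>2) \<partial>M))
    \<and> mo \<in> Mset p k Mlo Mhi \<and> \<delta>o \<in> \<Delta>
    \<and> (\<forall>m\<in>Mset p k Mlo Mhi. \<forall>\<delta>\<in>\<Delta>.
          sqnorm p (\<lambda>i. mvec k mo \<delta>o i - \<beta> i) \<le> sqnorm p (\<lambda>i. mvec k m \<delta> i - \<beta> i))"
  have PS: "prob_space M" using H by blast
  interpret prob_space M by (rule PS)
  have kp: "1 \<le> k" "k \<le> p" using H by auto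
  have xm: "\<forall>i<p. (\<lambda>\<omega>. x \<omega> i) \<in> borel_measurable M" using H by blast
  have em[measurable]: "\<epsilon> \<in> borel_measurable M" using H by blast
  have ce0: "AE \<omega> in M. real_cond_exp M (gen_sigma M p x) \<epsilon> \<omega> = 0" using H by blast
  have ceB: "AE \<omega> in M. nn_cond_exp M (gen_sigma M p x) (\<lambda>\<omega>. ennreal (\<bar>\<epsilon> \<omega>\<bar> powr d)) \<omega> \<le> ennreal B"
    using H by blast
  have sph: "\<And>\<tau>. \<tau>\<in>sphere_p p \<Longrightarrow>
          (\<integral>\<^sup>+\<omega>. ennreal (\<bar>rowdot p (x \<omega>) \<tau>\<bar> powr d) \<partial>M) \<le> ennreal B
        \<and> ennreal (1 / B) \<le> (\<integral>\<^sup>+\<omega>. ennreal ((rowdot p (x \<omega>) \<tau>)\<^sup>2) \<partial>M)" using H by blast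
  have mo: "mo \<in> Mset p k Mlo Mhi" "\<delta>o \<in> \<Delta>" using H by auto
  have opt: "\<forall>m\<in>Mset p k Mlo Mhi. \<forall>\<delta>\<in>\<Delta>.
          sqnorm p (\<lambda>i. mvec k mo \<delta>o i - \<beta> i) \<le> sqnorm p (\<lambda>i. mvec k m \<delta> i - \<beta> i)" using H by blast
  have B0: "B \<ge> 0" using assms(1) by simp
  have rm: "\<And>u. (\<lambda>\<omega>. rowdot p (x \<omega>) u) \<in> borel_measurable M" using rowdot_meas[OF xm] .
  have xsq: "integrable M (\<lambda>\<omega>. (x \<omega> i)^2)" if "i < p" for i
  proof -
    define e where "e = (\<lambda>j::nat. if j = i then 1 else (0::real))"
    have "sqnorm p e = (\<Sum>j<p. if j = i then 1 else 0)"
      unfolding sqnorm_def e_def by (intro sum.cong) auto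
    then have "sqnorm p e = 1" using that by simp
    then have "e \<in> sphere_p p" by (simp add: sphere_p_def)
    then have s1: "(\<integral>\<^sup>+\<omega>. ennreal (\<bar>rowdot p (x \<omega>) e\<bar> powr d) \<partial>M) \<le> ennreal B"
      using sph by blast
    have "\<And>X. rowdot p X e = X i" using that by (simp add: rowdot_def e_def if_distrib cong: if_cong)
    then have "(\<integral>\<^sup>+\<omega>. ennreal (\<bar>x \<omega> i\<bar> powr d) \<partial>M) \<le> ennreal B" using s1 by simp
    then show ?thesis using L2_of_powr(2)[OF PS _ assms(2) B0] xm that by blast
  qed
  have xx: "\<forall>i<p. \<forall>j<p. integrable M (\<lambda>\<omega>. x \<omega> i * x \<omega> j)"
    using xsq xm by (auto intro!: integrable_mult_L2)
  note WS = wsq_eq[OF xx]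
  have bnd: "1 / B \<le> (\<integral>\<omega>. (rowdot p (x \<omega>) \<tau>)^2 \<partial>M)
               \<and> (\<integral>\<omega>. (rowdot p (x \<omega>) \<tau>)^2 \<partial>M) \<le> 1 + B" if "\<tau> \<in> sphere_p p" for \<tau>
  proof -
    have eq: "(\<integral>\<^sup>+\<omega>. ennreal ((rowdot p (x \<omega>) \<tau>)\<^sup>2) \<partial>M) = ennreal (\<integral>\<omega>. (rowdot p (x \<omega>) \<tau>)^2 \<partial>M)"
      using WS(1) by (intro nn_integral_eq_integral) auto
    have "ennreal (1 / B) \<le> ennreal (\<integral>\<omega>. (rowdot p (x \<omega>) \<tau>)^2 \<partial>M)" using sph[OF that] eq by simp
    then have 1: "1 / B \<le> (\<integral>\<omega>. (rowdot p (x \<omega>) \<tau>)^2 \<partial>M)"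
      using assms(1) by (auto simp add: ennreal_le_iff2)
    have "ennreal (\<integral>\<omega>. (rowdot p (x \<omega>) \<tau>)^2 \<partial>M) \<le> ennreal (1 + B)"
      using L2_of_powr(1)[OF PS rm assms(2) B0 conjunct1[OF sph[OF that]]] eq by simp
    then have 2: "(\<integral>\<omega>. (rowdot p (x \<omega>) \<tau>)^2 \<partial>M) \<le> 1 + B"
      using B0 ennreal_le_iff[of "1 + B"] by simp
    show ?thesis using 1 2 by simp
  qed
  have QB: "sqnorm p u / B \<le> wsqnorm p (Sigma_x M x) u
       \<and> wsqnorm p (Sigma_x M x) u \<le> (1 + B) * sqnorm p u" for u
    unfolding WS(2) using quad_bounds[OF assms(1) WS(1) bnd] by blast
  define F where "F = gen_sigma M p x"
  have rF: "(\<lambda>\<omega>. restrict (x \<omega>) {..<p}) \<in> measurable F (PiM {..<p} (\<lambda>_. borel))"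
    unfolding F_def gen_sigma_def by (rule measurable_vimage_algebra1) (auto simp: space_PiM)
  have rM: "(\<lambda>\<omega>. restrict (x \<omega>) {..<p}) \<in> measurable M (PiM {..<p} (\<lambda>_. borel))"
    using xm by (intro measurable_restrict) auto
  have subalg: "subalgebra M F"
    unfolding subalgebra_def F_def gen_sigma_def
    using sets_image_in_sets[OF refl rM] by simp
  have "finite_measure_subalgebra M F"
    unfolding finite_measure_subalgebra_def finite_measure_subalgebra_axioms_def
    using subalg finite_measure_axioms by blast
  then interpret sigma_finite_subalgebra M F by (rule finite_measure_subalgebra_is_sigma_finite)
  have rowF: "(\<lambda>\<omega>. rowdot p (x \<omega>) u) \<in> borel_measurable F" for u
  proof -
    have g: "(\<lambda>f. \<Sum>i<p. f i * u i) \<in> borel_measurable (PiM {..<p} (\<lambda>_. borel))" by measurable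
    have "(\<lambda>\<omega>. rowdot p (x \<omega>) u) = (\<lambda>\<omega>. \<Sum>i<p. restrict (x \<omega>) {..<p} i * u i)"
      by (auto simp: rowdot_def intro!: ext sum.cong)
    then show ?thesis using measurable_compose[OF rF g] by simp
  qed
  have "(\<integral>\<^sup>+\<omega>. ennreal (\<bar>\<epsilon> \<omega>\<bar> powr d) \<partial>M)
        = (\<integral>\<^sup>+\<omega>. 1 * ennreal (\<bar>\<epsilon> \<omega>\<bar> powr d) \<partial>M)" by simp
  also have "\<dots> = (\<integral>\<^sup>+\<omega>. 1 * nn_cond_exp M F (\<lambda>\<omega>. ennreal (\<bar>\<epsilon> \<omega>\<bar> powr d)) \<omega> \<partial>M)"
    by (rule nn_cond_exp_intg[symmetric]) auto
  also have "\<dots> \<le> (\<integral>\<^sup>+\<omega>. ennreal B \<partial>M)"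
    using ceB unfolding F_def by (intro nn_integral_mono_AE) auto
  also have "\<dots> = ennreal B" by (simp add: emeasure_space_1)
  finally have "(\<integral>\<^sup>+\<omega>. ennreal (\<bar>\<epsilon> \<omega>\<bar> powr d) \<partial>M) \<le> ennreal B" .
  note esq = L2_of_powr(2)[OF PS em assms(2) B0 this]
  have cross: "(\<integral>\<omega>. rowdot p (x \<omega>) u * \<epsilon> \<omega> \<partial>M) = 0" for u
  proof -
    have I: "integrable M (\<lambda>\<omega>. rowdot p (x \<omega>) u * \<epsilon> \<omega>)"
      using WS(1) esq rm em by (rule integrable_mult_L2)
    have "(\<integral>\<omega>. rowdot p (x \<omega>) u * \<epsilon> \<omega> \<partial>M) = (\<integral>\<omega>. rowdot p (x \<omega>) u * real_cond_exp M F \<epsilon> \<omega> \<partial>M)"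
      using real_cond_exp_intg(2)[OF I rowF em] by simp
    also have "\<dots> = (\<integral>\<omega>. 0 \<partial>M)"
      using ce0 rm unfolding F_def[symmetric] by (intro integral_cong_AE) auto
    finally show ?thesis by simp
  qed
  have Q: "Qo M p x \<epsilon> \<beta> v = (wsqnorm p (Sigma_x M x) (\<lambda>i. v i - \<beta> i) + (\<integral>\<omega>. (\<epsilon> \<omega>)^2 \<partial>M)) / real p" for v
  proof -
    define r where "r = (\<lambda>\<omega>. rowdot p (x \<omega>) (\<lambda>i. v i - \<beta> i))"
    have "\<And>\<omega>. ((rowdot p (x \<omega>) \<beta> + \<epsilon> \<omega>) - rowdot p (x \<omega>) v)^2 = (r \<omega>)^2 + (-2) * (r \<omega> * \<epsilon> \<omega>) + (\<epsilon> \<omega>)^2"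
      by (simp add: r_def rowdot_def sum_subtractf right_diff_distrib power2_eq_square algebra_simps)
    then have "(\<integral>\<omega>. ((rowdot p (x \<omega>) \<beta> + \<epsilon> \<omega>) - rowdot p (x \<omega>) v)^2 \<partial>M)
      = (\<integral>\<omega>. (r \<omega>)^2 + (-2) * (r \<omega> * \<epsilon> \<omega>) + (\<epsilon> \<omega>)^2 \<partial>M)" by simp
    also have "\<dots> = (\<integral>\<omega>. (r \<omega>)^2 \<partial>M) + (-2) * (\<integral>\<omega>. r \<omega> * \<epsilon> \<omega> \<partial>M) + (\<integral>\<omega>. (\<epsilon> \<omega>)^2 \<partial>M)"
    proof -
      have I: "integrable M (\<lambda>\<omega>. r \<omega> * \<epsilon> \<omega>)"
        unfolding r_def using WS(1) esq rm em by (rule integrable_mult_L2)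
      show ?thesis using I WS(1) esq unfolding r_def
        by (simp add: Bochner_Integration.integral_add)
    qed
    finally show ?thesis unfolding Qo_def WS(2) cross r_def by simp
  qed
  have p0: "real p > 0" using kp by simp
  show "\<forall>m1\<in>Mset p k Mlo Mhi. \<forall>\<delta>1\<in>\<Delta>.
         (\<forall>m\<in>Mset p k Mlo Mhi. \<forall>\<delta>\<in>\<Delta>. Qo M p x \<epsilon> \<beta> (mvec k m1 \<delta>1) \<le> Qo M p x \<epsilon> \<beta> (mvec k m \<delta>))
         \<longrightarrow> (\<forall>m\<in>Mset p k Mlo Mhi. \<forall>\<delta>\<in>\<Delta>.
                wsqnorm p (Sigma_x M x) (\<lambda>i. mvec k m1 \<delta>1 i - \<beta> i)
                  \<le> wsqnorm p (Sigma_x M x) (\<lambda>i. mvec k m \<delta> i - \<beta> i))"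
    unfolding Q using p0 by (auto simp: divide_right_mono_neg divide_le_cancel)
  define W where "W = (INF m\<delta>\<in>Mset p k Mlo Mhi \<times> \<Delta>.
                  wsqnorm p (Sigma_x M x) (\<lambda>i. mvec k (fst m\<delta>) (snd m\<delta>) i - \<beta> i))"
  define b where "b = (\<lambda>i. \<beta> i - mvec k mo \<delta>o i)"
  have sb: "sqnorm p b = sqnorm p (\<lambda>i. mvec k mo \<delta>o i - \<beta> i)"
    unfolding sqnorm_def b_def by (simp add: power2_commute)
  have ne: "Mset p k Mlo Mhi \<times> \<Delta> \<noteq> {}" using mo by auto
  have W1: "sqnorm p b / B \<le> W" unfolding W_def
  proof (rule cINF_greatest[OF ne])
    fix m\<delta> assume "m\<delta> \<in> Mset p k Mlo Mhi \<times> \<Delta>"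
    then have "sqnorm p b \<le> sqnorm p (\<lambda>i. mvec k (fst m\<delta>) (snd m\<delta>) i - \<beta> i)"
      using opt sb by auto
    then have "sqnorm p b / B \<le> sqnorm p (\<lambda>i. mvec k (fst m\<delta>) (snd m\<delta>) i - \<beta> i) / B"
      using B0 by (rule divide_right_mono)
    then show "sqnorm p b / B \<le> wsqnorm p (Sigma_x M x) (\<lambda>i. mvec k (fst m\<delta>) (snd m\<delta>) i - \<beta> i)"
      using QB by (meson order.trans)
  qed
  have W2: "W \<le> (1 + B) * sqnorm p b" unfolding W_def
  proof -
    have bdd: "bdd_below ((\<lambda>m\<delta>. wsqnorm p (Sigma_x M x) (\<lambda>i. mvec k (fst m\<delta>) (snd m\<delta>) i - \<beta> i)) ` (Mset p k Mlo Mhi \<times> \<Delta>))"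
    proof (rule bdd_belowI)
      fix y assume "y \<in> (\<lambda>m\<delta>. wsqnorm p (Sigma_x M x) (\<lambda>i. mvec k (fst m\<delta>) (snd m\<delta>) i - \<beta> i)) ` (Mset p k Mlo Mhi \<times> \<Delta>)"
      then obtain m\<delta> where y: "y = wsqnorm p (Sigma_x M x) (\<lambda>i. mvec k (fst m\<delta>) (snd m\<delta>) i - \<beta> i)" by blast
      have "0 \<le> sqnorm p (\<lambda>i. mvec k (fst m\<delta>) (snd m\<delta>) i - \<beta> i) / B"
        using sqnorm_nonneg B0 by simp
      then show "0 \<le> y" unfolding y using QB by (meson order.trans)
    qed
    have "(INF m\<delta>\<in>Mset p k Mlo Mhi \<times> \<Delta>. wsqnorm p (Sigma_x M x) (\<lambda>i. mvec k (fst m\<delta>) (snd m\<delta>) i - \<beta> i))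
       \<le> wsqnorm p (Sigma_x M x) (\<lambda>i. mvec k mo \<delta>o i - \<beta> i)"
      using cINF_lower[OF bdd, of "(mo, \<delta>o)"] mo by auto
    also have "\<dots> \<le> (1 + B) * sqnorm p b" using QB sb by metis
    finally show "(INF m\<delta>\<in>Mset p k Mlo Mhi \<times> \<Delta>. wsqnorm p (Sigma_x M x) (\<lambda>i. mvec k (fst m\<delta>) (snd m\<delta>) i - \<beta> i))
       \<le> (1 + B) * sqnorm p b" .
  qed
  have "0 \<le> sqnorm p b / B" using sqnorm_nonneg B0 by simp
  then have W0: "W \<ge> 0" using W1 by linarith
  have "sqnorm p b \<le> B * W" using W1 assms(1) by (simp add: field_simps)
  also have "\<dots> \<le> (1 + B) * W" using W0 by (simp add: mult_right_mono)
  finally have "sqnorm p b \<le> (1 + B) * W" .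
  then show "let b = (\<lambda>i. \<beta> i - mvec k mo \<delta>o i);
           W = (INF m\<delta>\<in>Mset p k Mlo Mhi \<times> \<Delta>.
                  wsqnorm p (Sigma_x M x) (\<lambda>i. mvec k (fst m\<delta>) (snd m\<delta>) i - \<beta> i))
       in sqnorm p b \<le> (1 + B) * W \<and> W \<le> (1 + B) * sqnorm p b"
    using W2 unfolding Let_def W_def b_def by simp
qed

end
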